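(* Let $(R,L,[-,-],\rho,\rhd)$ be a post-Lie-Rinehart algebra over a field $k$ of characteristic $0$. Then the algebra of elementary $R$-module endomorphisms $\mathrm{El}_R(L)$ is the $R$-subalgebra of $(\mathrm{End}_R(L),\circ)$ generated by $\{dX,\ \delta X : X\in L\}$.
   Context: A Lie-Rinehart algebra $(R,L,\llbracket-,-\rrbracket,\rho)$: $R$ a commutative $k$-algebra, $L$ a $k$-Lie algebra that is an $R$-module, $\rho\colon L\to\mathrm{Der}_k(R)$ an $R$-linear Lie algebra morphism (write $X.f=\rho(X)(f)$), with $\llbracket X,fY\rrbracket=(X.f)Y+f\llbracket X,Y\rrbracket$. A post-Lie-Rinehart algebra is such a Lie-Rinehart algebra together with a connection $\rhd$ ($k$-bilinear, $R$-linear in the first argument, $X\rhd(fY)=(X.f)Y+fX\rhd Y$) that is flat ($\llbracket X,Y\rrbracket\rhd Z=X\rhd(Y\rhd Z)-Y\rhd(X\rhd Z)$) and whose torsion $T(X,Y)=X\rhd Y-Y\rhd X-\llbracket X,Y\rrbracket$ is parallel ($X\rhd T(Y,Z)=T(X\rhd Y,Z)+T(Y,X\rhd Z)$); the bracket $[X,Y]=-T(X,Y)$ is the associated $R$-bilinear post-Lie bracket. For $X\in L$ define $dX,\delta X\in\mathrm{End}_R(L)$ by $dX(Z)=Z\rhd X$ and $\delta X(Z)=T(Z,X)$. For $\nu\in\mathrm{End}_R(L)$ and $X\in L$ let $(\hat\nabla_X\nu)(Y)=X\rhd(\nu(Y))-\nu(X\rhd Y)$. $\mathrm{El}_R(L)$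 is the $R$-subalgebra of $(\mathrm{End}_R(L),\circ)$ generated by all $\hat\nabla_{X_1}\hat\nabla_{X_2}\cdots\hat\nabla_{X_m}dY$ and $\hat\nabla_{X_1}\cdots\hat\nabla_{X_m}\delta Y$ with $m\ge0$ and $X_1,\dots,X_m,Y\in L$. *)

theory Defs
  imports Main
begin

text \<open>
  A post-Lie-Rinehart algebra over a field k of characteristic 0.
  k is the type 'k (class field_char_0), R is the type 'r (a commutative ring)
  made into a k-algebra via the structure map iota :: 'k => 'r,
  L is the additive group 'l with R-action sm (scalar multiplication),
  br is the Lie bracket, rho the anchor (X.f = rho X f), cn the connection (X |> Y = cn X Y).
  The k-linear structure on L and R is the one induced through iota.
\<close>

definition k_algebra :: "('k::field_char_0 \<Rightarrow> 'r::comm_ring_1) \<Rightarrow> bool" where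
  "k_algebra iota \<longleftrightarrow>
     iota 1 = 1 \<and> (\<forall>a b. iota (a + b) = iota a + iota b) \<and> (\<forall>a b. iota (a * b) = iota a * iota b)"

definition r_module :: "('r::comm_ring_1 \<Rightarrow> 'l::ab_group_add \<Rightarrow> 'l) \<Rightarrow> bool" where
  "r_module sm \<longleftrightarrow>
     (\<forall>X. sm 1 X = X) \<and> (\<forall>f g X. sm (f * g) X = sm f (sm g X)) \<and>
     (\<forall>f g X. sm (f + g) X = sm f X + sm g X) \<and> (\<forall>f X Y. sm f (X + Y) = sm f X + sm f Y)"

definition k_bilinear :: "('k::field_char_0 \<Rightarrow> 'r::comm_ring_1) \<Rightarrow> ('r \<Rightarrow> 'l::ab_group_add \<Rightarrow> 'l)
    \<Rightarrow> ('l \<Rightarrow> 'l \<Rightarrow> 'l) \<Rightarrow> bool" where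
  "k_bilinear iota sm b \<longleftrightarrow>
     (\<forall>X Y Z. b (X + Y) Z = b X Z + b Y Z) \<and> (\<forall>X Y Z. b X (Y + Z) = b X Y + b X Z) \<and>
     (\<forall>c X Y. b (sm (iota c) X) Y = sm (iota c) (b X Y)) \<and>
     (\<forall>c X Y. b X (sm (iota c) Y) = sm (iota c) (b X Y))"

definition lie_algebra :: "('k::field_char_0 \<Rightarrow> 'r::comm_ring_1) \<Rightarrow> ('r \<Rightarrow> 'l::ab_group_add \<Rightarrow> 'l)
    \<Rightarrow> ('l \<Rightarrow> 'l \<Rightarrow> 'l) \<Rightarrow> bool" where
  "lie_algebra iota sm br \<longleftrightarrow>
     k_bilinear iota sm br \<and> (\<forall>X. br X X = 0) \<and>
     (\<forall>X Y Z. br X (br Y Z) + br Y (br Z X) + br Z (br X Y) = 0)"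

definition k_derivation :: "('k::field_char_0 \<Rightarrow> 'r::comm_ring_1) \<Rightarrow> ('r \<Rightarrow> 'r) \<Rightarrow> bool" where
  "k_derivation iota D \<longleftrightarrow>
     (\<forall>f g. D (f + g) = D f + D g) \<and> (\<forall>c f. D (iota c * f) = iota c * D f) \<and>
     (\<forall>f g. D (f * g) = D f * g + f * D g)"

definition lie_rinehart ::
  "('k::field_char_0 \<Rightarrow> 'r::comm_ring_1) \<Rightarrow> ('r \<Rightarrow> 'l::ab_group_add \<Rightarrow> 'l)
    \<Rightarrow> ('l \<Rightarrow> 'l \<Rightarrow> 'l) \<Rightarrow> ('l \<Rightarrow> 'r \<Rightarrow> 'r) \<Rightarrow> bool" where
  "lie_rinehart iota sm br rho \<longleftrightarrow>
     k_algebra iota \<and> r_module sm \<and> lie_algebra iota sm br \<and>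
     (\<forall>X. k_derivation iota (rho X)) \<and>
     (\<forall>X Y. rho (X + Y) = (\<lambda>f. rho X f + rho Y f)) \<and>
     (\<forall>f X. rho (sm f X) = (\<lambda>g. f * rho X g)) \<and>
     (\<forall>X Y. rho (br X Y) = (\<lambda>f. rho X (rho Y f) - rho Y (rho X f))) \<and>
     (\<forall>X Y f. br X (sm f Y) = sm (rho X f) Y + sm f (br X Y))"

definition torsion :: "('l::ab_group_add \<Rightarrow> 'l \<Rightarrow> 'l) \<Rightarrow> ('l \<Rightarrow> 'l \<Rightarrow> 'l) \<Rightarrow> 'l \<Rightarrow> 'l \<Rightarrow> 'l" where
  "torsion br cn X Y = cn X Y - cn Y X - br X Y"

definition post_lie_rinehart ::
  "('k::field_char_0 \<Rightarrow> 'r::comm_ring_1) \<Rightarrow> ('r \<Rightarrow> 'l::ab_group_add \<Rightarrow> 'l)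
    \<Rightarrow> ('l \<Rightarrow> 'l \<Rightarrow> 'l) \<Rightarrow> ('l \<Rightarrow> 'r \<Rightarrow> 'r) \<Rightarrow> ('l \<Rightarrow> 'l \<Rightarrow> 'l) \<Rightarrow> bool" where
  "post_lie_rinehart iota sm br rho cn \<longleftrightarrow>
     lie_rinehart iota sm br rho \<and>
     \<comment> \<open>connection: k-bilinear, R-linear in the first argument, Leibniz in the second\<close>
     k_bilinear iota sm cn \<and>
     (\<forall>f X Y. cn (sm f X) Y = sm f (cn X Y)) \<and>
     (\<forall>f X Y. cn X (sm f Y) = sm (rho X f) Y + sm f (cn X Y)) \<and>
     \<comment> \<open>flat\<close>
     (\<forall>X Y Z. cn (br X Y) Z = cn X (cn Y Z) - cn Y (cn X Z)) \<and>
     \<comment> \<open>parallel torsion\<close>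
     (\<forall>X Y Z. cn X (torsion br cn Y Z) =
                torsion br cn (cn X Y) Z + torsion br cn Y (cn X Z))"

definition dop :: "('l \<Rightarrow> 'l \<Rightarrow> 'l) \<Rightarrow> 'l \<Rightarrow> 'l \<Rightarrow> 'l" where
  "dop cn X = (\<lambda>Z. cn Z X)"

definition deltaop :: "('l::ab_group_add \<Rightarrow> 'l \<Rightarrow> 'l) \<Rightarrow> ('l \<Rightarrow> 'l \<Rightarrow> 'l) \<Rightarrow> 'l \<Rightarrow> 'l \<Rightarrow> 'l" where
  "deltaop br cn X = (\<lambda>Z. torsion br cn Z X)"

definition nabla_hat :: "('l::ab_group_add \<Rightarrow> 'l \<Rightarrow> 'l) \<Rightarrow> 'l \<Rightarrow> ('l \<Rightarrow> 'l) \<Rightarrow> 'l \<Rightarrow> 'l" where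
  "nabla_hat cn X nu = (\<lambda>Y. cn X (nu Y) - nu (cn X Y))"

definition nabla_iter :: "('l::ab_group_add \<Rightarrow> 'l \<Rightarrow> 'l) \<Rightarrow> 'l list \<Rightarrow> ('l \<Rightarrow> 'l) \<Rightarrow> 'l \<Rightarrow> 'l" where
  "nabla_iter cn Xs nu = foldr (nabla_hat cn) Xs nu"

inductive_set r_subalg_gen :: "('r \<Rightarrow> 'l::ab_group_add \<Rightarrow> 'l) \<Rightarrow> ('l \<Rightarrow> 'l) set \<Rightarrow> ('l \<Rightarrow> 'l) set"
  for sm :: "'r \<Rightarrow> 'l \<Rightarrow> 'l" and S :: "('l \<Rightarrow> 'l) set" where
  gen: "\<phi> \<in> S \<Longrightarrow> \<phi> \<in> r_subalg_gen sm S"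
| unit: "id \<in> r_subalg_gen sm S"
| add: "\<phi> \<in> r_subalg_gen sm S \<Longrightarrow> \<psi> \<in> r_subalg_gen sm S \<Longrightarrow> (\<lambda>Z. \<phi> Z + \<psi> Z) \<in> r_subalg_gen sm S"
| comp: "\<phi> \<in> r_subalg_gen sm S \<Longrightarrow> \<psi> \<in> r_subalg_gen sm S \<Longrightarrow> \<phi> \<circ> \<psi> \<in> r_subalg_gen sm S"
| smul: "\<phi> \<in> r_subalg_gen sm S \<Longrightarrow> (\<lambda>Z. sm f (\<phi> Z)) \<in> r_subalg_gen sm S"

definition El :: "('r \<Rightarrow> 'l::ab_group_add \<Rightarrow> 'l) \<Rightarrow> ('l \<Rightarrow> 'l \<Rightarrow> 'l) \<Rightarrow> ('l \<Rightarrow> 'l \<Rightarrow> 'l) \<Rightarrow> ('l \<Rightarrow> 'l) set" where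
  "El sm br cn = r_subalg_gen sm
     ({nabla_iter cn Xs (dop cn Y) | Xs Y. True} \<union> {nabla_iter cn Xs (deltaop br cn Y) | Xs Y. True})"

end

theory Submission
  imports Defs
begin

definition addf :: "('l::ab_group_add \<Rightarrow> 'l) \<Rightarrow> bool" where
  "addf \<phi> \<longleftrightarrow> (\<forall>a b. \<phi> (a + b) = \<phi> a + \<phi> b)"

lemma addf_diff: "addf \<phi> \<Longrightarrow> \<phi> (a - b) = \<phi> a - \<phi> b"
  unfolding addf_def by (metis add_diff_cancel_right' diff_add_cancel eq_diff_eq)

lemma gen_mono:
  assumes "S \<subseteq> r_subalg_gen sm T"
  shows "r_subalg_gen sm S \<subseteq> r_subalg_gen sm T"
proof
  fix x assume "x \<in> r_subalg_gen sm S"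
  then show "x \<in> r_subalg_gen sm T"
  proof induct
    case (gen \<phi>) then show ?case using assms by blast
  next
    case unit show ?case by (rule r_subalg_gen.unit)
  next
    case (add \<phi> \<psi>) then show ?case by (blast intro: r_subalg_gen.add)
  next
    case (comp \<phi> \<psi>) then show ?case by (blast intro: r_subalg_gen.comp)
  next
    case (smul \<phi> f) then show ?case by (blast intro: r_subalg_gen.smul)
  qed
qed

lemma sm_facts:
  assumes "r_module sm"
  shows "sm 0 x = 0" "sm (-1) x = - x" "sm f (a - b) = sm f a - sm f b"
proof -
  have m: "\<And>f g X. sm (f + g) X = sm f X + sm g X" "\<And>X. sm 1 X = X"
    "\<And>f X Y. sm f (X + Y) = sm f X + sm f Y"
    using assms unfolding r_module_def by auto
  have "sm 0 x = sm 0 x + sm 0 x" using m(1)[of 0 0 x] by simp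
  then show z: "sm 0 x = 0" by simp
  have "sm (1 + -1) x = x + sm (-1) x" using m(1)[of 1 "-1" x] m(2) by simp
  then show "sm (-1) x = - x" using z by (simp add: eq_neg_iff_add_eq_0 add.commute)
  show "sm f (a - b) = sm f a - sm f b"
    using m(3)[of f "a - b" b] by (simp add: eq_diff_eq)
qed

lemma sub_closed:
  assumes "r_module sm" "\<phi> \<in> r_subalg_gen sm S" "\<psi> \<in> r_subalg_gen sm S"
  shows "(\<lambda>Z. \<phi> Z - \<psi> Z) \<in> r_subalg_gen sm S"
proof -
  have "(\<lambda>Z. sm (-1) (\<psi> Z)) \<in> r_subalg_gen sm S" using assms(3) by (rule r_subalg_gen.smul)
  then have "(\<lambda>Z. \<phi> Z + sm (-1) (\<psi> Z)) \<in> r_subalg_gen sm S"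
    using assms(2) by (intro r_subalg_gen.add)
  then show ?thesis using sm_facts(2)[OF assms(1)] by simp
qed

lemma zero_closed:
  assumes "r_module sm"
  shows "(\<lambda>Z. 0) \<in> r_subalg_gen sm S"
proof -
  have "(\<lambda>Z. sm 0 (id Z)) \<in> r_subalg_gen sm S" by (intro r_subalg_gen.smul r_subalg_gen.unit)
  then show ?thesis using sm_facts(1)[OF assms] by simp
qed

lemma main_closure:
  assumes P: "post_lie_rinehart iota sm br rho cn"
  defines "A \<equiv> r_subalg_gen sm ({dop cn X | X. True} \<union> {deltaop br cn X | X. True})"
  shows "\<phi> \<in> A \<Longrightarrow> addf \<phi> \<and> (\<forall>X. nabla_hat cn X \<phi> \<in> A)"
proof -
  have LR: "lie_rinehart iota sm br rho" and kb: "k_bilinear iota sm cn"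
    and lf: "\<And>f X Y. cn X (sm f Y) = sm (rho X f) Y + sm f (cn X Y)"
    and flat: "\<And>X Y Z. cn (br X Y) Z = cn X (cn Y Z) - cn Y (cn X Z)"
    and par: "\<And>X Y Z. cn X (torsion br cn Y Z) = torsion br cn (cn X Y) Z + torsion br cn Y (cn X Z)"
    using P unfolding post_lie_rinehart_def by auto
  have rm: "r_module sm" and la: "lie_algebra iota sm br" using LR unfolding lie_rinehart_def by auto
  have smadd: "\<And>f X Y. sm f (X + Y) = sm f X + sm f Y" using rm unfolding r_module_def by auto
  have c1: "\<And>X Y Z. cn (X + Y) Z = cn X Z + cn Y Z" and c2: "\<And>X Y Z. cn X (Y + Z) = cn X Y + cn X Z"
    using kb unfolding k_bilinear_def by auto
  have b1: "\<And>X Y Z. br (X + Y) Z = br X Z + br Y Z" and b2: "\<And>X Y Z. br X (Y + Z) = br X Y + br X Z"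
    and bxx: "\<And>X. br X X = 0"
    using la unfolding lie_algebra_def k_bilinear_def by auto
  have c1a: "addf (\<lambda>X. cn X Z)" for Z using c1 unfolding addf_def by auto
  have c2a: "addf (cn X)" for X using c2 unfolding addf_def by auto
  have c1d: "cn (a - b) Z = cn a Z - cn b Z" for a b Z using addf_diff[OF c1a] by simp
  have c2d: "cn X (a - b) = cn X a - cn X b" for X a b using addf_diff[OF c2a] by simp
  have bskew: "br Z X = - br X Z" for X Z
  proof -
    have "0 = br (X + Z) (X + Z)" by (simp add: bxx)
    also have "\<dots> = br X X + br X Z + (br Z X + br Z Z)" by (simp add: b1 b2)
    also have "\<dots> = br X Z + br Z X" by (simp add: bxx)
    finally show ?thesis by (simp add: eq_neg_iff_add_eq_0 add.commute)
  qed
  have tadd: "addf (\<lambda>Z. torsion br cn Z X)" for X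
    unfolding addf_def torsion_def by (simp add: c1 c2 b1 algebra_simps)
  have gd: "dop cn Y \<in> A" for Y unfolding A_def by (rule r_subalg_gen.gen) auto
  have gt: "deltaop br cn Y \<in> A" for Y unfolding A_def by (rule r_subalg_gen.gen) auto
  have nd: "nabla_hat cn X (dop cn Y) =
     (\<lambda>Z. (\<lambda>Z. dop cn (cn X Y) Z - (dop cn Y \<circ> dop cn X) Z) Z + (dop cn Y \<circ> deltaop br cn X) Z)" for X Y
  proof
    fix Z
    have "cn X (cn Z Y) = cn (br X Z) Y + cn Z (cn X Y)" using flat[of X Z Y] by simp
    moreover have "cn (torsion br cn Z X) Y = cn (cn Z X) Y - cn (cn X Z) Y + cn (br X Z) Y"
      unfolding torsion_def using bskew[of Z X] by (simp add: c1d c1 algebra_simps)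
    ultimately show "nabla_hat cn X (dop cn Y) Z = ((\<lambda>Z. dop cn (cn X Y) Z - (dop cn Y \<circ> dop cn X) Z) Z + (dop cn Y \<circ> deltaop br cn X) Z)"
      unfolding nabla_hat_def dop_def deltaop_def by (simp add: algebra_simps)
  qed
  have nt: "nabla_hat cn X (deltaop br cn Y) = deltaop br cn (cn X Y)" for X Y
    unfolding nabla_hat_def deltaop_def by (rule ext) (simp add: par)
  assume "\<phi> \<in> A"
  then show ?thesis unfolding A_def
  proof induct
    case (gen \<phi>)
    then show ?case
    proof (elim UnE CollectE exE conjE)
      fix X assume e: "\<phi> = dop cn X"
      show ?thesis unfolding e
      proof
        show "addf (dop cn X)" using c1a unfolding dop_def .
        show "\<forall>Xa. nabla_hat cn Xa (dop cn X) \<in> r_subalg_gen sm ({dop cn X |X. True} \<union> {deltaop br cn X |X. True})"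
        proof
          fix Xa
          have h: "dop cn Y \<circ> dop cn Xa \<in> A" "dop cn Y \<circ> deltaop br cn Xa \<in> A" for Y
            using gd gt unfolding A_def by (blast intro: r_subalg_gen.comp)+
          have "(\<lambda>Z. (\<lambda>Z. dop cn (cn Xa X) Z - (dop cn X \<circ> dop cn Xa) Z) Z + (dop cn X \<circ> deltaop br cn Xa) Z) \<in> A"
          proof -
            have "(\<lambda>Z. dop cn (cn Xa X) Z - (dop cn X \<circ> dop cn Xa) Z) \<in> A"
              using sub_closed[OF rm gd[unfolded A_def] h(1)[unfolded A_def]] unfolding A_def .
            from r_subalg_gen.add[OF this[unfolded A_def] h(2)[unfolded A_def]]
            show ?thesis unfolding A_def .
          qed
          then show "nabla_hat cn Xa (dop cn X) \<in> r_subalg_gen sm ({dop cn X |X. True} \<union> {deltaop br cn X |X. True})"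
            unfolding A_def nd .
        qed
      qed
    next
      fix X assume e: "\<phi> = deltaop br cn X"
      show ?thesis unfolding e
      proof
        show "addf (deltaop br cn X)" using tadd unfolding deltaop_def .
        show "\<forall>Xa. nabla_hat cn Xa (deltaop br cn X) \<in> r_subalg_gen sm ({dop cn X |X. True} \<union> {deltaop br cn X |X. True})"
          using gt unfolding A_def by (auto simp: nt)
      qed
    qed
  next
    case unit
    have "nabla_hat cn X id = (\<lambda>Z. 0)" for X unfolding nabla_hat_def by auto
    then have "\<forall>X. nabla_hat cn X id \<in> r_subalg_gen sm ({dop cn X |X. True} \<union> {deltaop br cn X |X. True})"
      using zero_closed[OF rm] by metis
    moreover have "addf id" by (simp add: addf_def)
    ultimately show ?case by blast
  next
    case (add \<phi> \<psi>)
    have "nabla_hat cn X (\<lambda>Z. \<phi> Z + \<psi> Z) = (\<lambda>Z. nabla_hat cn X \<phi> Z + nabla_hat cn X \<psi> Z)" for X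
      unfolding nabla_hat_def by (rule ext) (simp add: c2 algebra_simps)
    then show ?case using add by (auto simp: addf_def algebra_simps intro: r_subalg_gen.add)
  next
    case (comp \<phi> \<psi>)
    let ?G = "r_subalg_gen sm ({dop cn X |X. True} \<union> {deltaop br cn X |X. True})"
    have e: "nabla_hat cn X (\<phi> \<circ> \<psi>) = (\<lambda>Z. (nabla_hat cn X \<phi> \<circ> \<psi>) Z + (\<phi> \<circ> nabla_hat cn X \<psi>) Z)" for X
      unfolding nabla_hat_def using addf_diff[of \<phi>] comp by (intro ext) auto
    have "nabla_hat cn X (\<phi> \<circ> \<psi>) \<in> ?G" for X
      unfolding e
      by (rule r_subalg_gen.add; rule r_subalg_gen.comp) (use comp in blast)+
    moreover have "addf (\<phi> \<circ> \<psi>)" using comp by (simp add: addf_def)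
    ultimately show ?case by blast
  next
    case (smul \<phi> f)
    have e: "nabla_hat cn X (\<lambda>Z. sm f (\<phi> Z)) = (\<lambda>Z. sm (rho X f) (id (\<phi> Z)) + sm f (nabla_hat cn X \<phi> Z))" for X
      unfolding nabla_hat_def by (intro ext) (simp add: lf sm_facts(3)[OF rm])
    let ?G = "r_subalg_gen sm ({dop cn X |X. True} \<union> {deltaop br cn X |X. True})"
    have h1: "(\<lambda>Z. sm (rho X f) (id (\<phi> Z))) \<in> ?G" for X
    proof -
      have "id \<circ> \<phi> \<in> ?G" by (rule r_subalg_gen.comp[OF r_subalg_gen.unit smul(1)])
      from r_subalg_gen.smul[OF this, of "rho X f"] show ?thesis by (simp add: o_def)
    qed
    have h2: "(\<lambda>Z. sm f (nabla_hat cn X \<phi> Z)) \<in> ?G" for X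
      using smul(2) by (blast intro: r_subalg_gen.smul)
    have "nabla_hat cn X (\<lambda>Z. sm f (\<phi> Z)) \<in> ?G" for X
      unfolding e by (rule r_subalg_gen.add[OF h1 h2])
    moreover have "addf (\<lambda>Z. sm f (\<phi> Z))" using smul by (simp add: addf_def smadd)
    ultimately show ?case by blast
  qed
qed

theorem proposition4p4:
  fixes iota :: "'k::field_char_0 \<Rightarrow> 'r::comm_ring_1"
    and sm :: "'r \<Rightarrow> 'l::ab_group_add \<Rightarrow> 'l"
    and br :: "'l \<Rightarrow> 'l \<Rightarrow> 'l"
    and rho :: "'l \<Rightarrow> 'r \<Rightarrow> 'r"
    and cn :: "'l \<Rightarrow> 'l \<Rightarrow> 'l"
  assumes "post_lie_rinehart iota sm br rho cn"
  shows "El sm br cn = r_subalg_gen sm ({dop cn X | X. True} \<union> {deltaop br cn X | X. True})"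
proof
  let ?A = "r_subalg_gen sm ({dop cn X | X. True} \<union> {deltaop br cn X | X. True})"
  have it: "\<phi> \<in> ?A \<Longrightarrow> nabla_iter cn Xs \<phi> \<in> ?A" for Xs \<phi>
  proof (induct Xs)
    case Nil then show ?case by (simp add: nabla_iter_def)
  next
    case (Cons a Xs)
    then have "nabla_iter cn Xs \<phi> \<in> ?A" by simp
    from main_closure[OF assms this] show ?case by (simp add: nabla_iter_def)
  qed
  have gd: "dop cn Y \<in> ?A" for Y by (rule r_subalg_gen.gen) auto
  have gt: "deltaop br cn Y \<in> ?A" for Y by (rule r_subalg_gen.gen) auto
  show "El sm br cn \<subseteq> ?A" unfolding El_def
    by (rule gen_mono) (use it gd gt in blast)
  show "?A \<subseteq> El sm br cn" unfolding El_def
  proof (rule gen_mono, safe)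
    fix X
    show "dop cn X \<in> r_subalg_gen sm ({nabla_iter cn Xs (dop cn Y) |Xs Y. True} \<union> {nabla_iter cn Xs (deltaop br cn Y) |Xs Y. True})"
      by (rule r_subalg_gen.gen) (auto simp: nabla_iter_def intro!: exI[of _ "[]"])
    show "deltaop br cn X \<in> r_subalg_gen sm ({nabla_iter cn Xs (dop cn Y) |Xs Y. True} \<union> {nabla_iter cn Xs (deltaop br cn Y) |Xs Y. True})"
      by (rule r_subalg_gen.gen) (auto simp: nabla_iter_def intro!: exI[of _ "[]"])
  qed
qed

end
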